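(* Let $F$ be a function from the pure states of $\mathcal{H}'$ to $[0,\infty)$ that is an ensemble Z$_2$-frameness monotone, i.e. for every pure state $|\psi\rangle$ and every Z$_2$-invariant measurement $\{\mathcal{E}_\mu\}$ such that each outcome $\mu$ with $w_\mu:=\mathrm{Tr}\,\mathcal{E}_\mu(|\psi\rangle\langle\psi|)>0$ satisfies $\mathcal{E}_\mu(|\psi\rangle\langle\psi|)=w_\mu|\phi_\mu\rangle\langle\phi_\mu|$ for a pure state $|\phi_\mu\rangle$, one has $\sum_\mu w_\mu F(|\phi_\mu\rangle)\le F(|\psi\rangle)$. Then there is a non-decreasing concave function $f:[0,1]\to\mathbb{R}$ such that $F(|\psi\rangle)=f(\mathcal{C}(|\psi\rangle))$ for every pure state $|\psi\rangle\in\mathcal{H}'$.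
   Context: $\mathcal{H}'$ is a two-dimensional Hilbert space with orthonormal basis $|0\rangle,|1\rangle$; $\pi=|0\rangle\langle0|-|1\rangle\langle1|$. A Z$_2$-invariant operation is a completely positive, trace-nonincreasing linear map $\mathcal{E}$ on operators on $\mathcal{H}'$ with $\mathcal{E}(\pi X\pi)=\pi\mathcal{E}(X)\pi$ for all $X$. A Z$_2$-invariant measurement is a (countable) family $\{\mathcal{E}_\mu\}$ of Z$_2$-invariant operations whose sum is trace-preserving. For a pure state $|\chi\rangle$, $\mathcal{C}(|\chi\rangle)=2\min\{|\langle0|\chi\rangle|^2,|\langle1|\chi\rangle|^2\}\in[0,1]$. *)

theory Defs
  imports "HOL-Analysis.Analysis"
begin

text \<open>Operators on the two-dimensional Hilbert space H' = C^2 with orthonormal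
basis |0>, |1> given by the indices (0::2), (1::2) of the numeral type 2.\<close>

type_synonym qvec = "complex ^ 2"
type_synonym qop = "complex ^ 2 ^ 2"

definition smat :: "complex \<Rightarrow> qop \<Rightarrow> qop" where
  "smat c A = (\<chi> i j. c * A $ i $ j)"

definition proj :: "qvec \<Rightarrow> qop" where
  "proj v = (\<chi> i j. v $ i * cnj (v $ j))"

definition piZ2 :: qop where
  "piZ2 = (\<chi> i j. if i = j then (if i = 0 then 1 else -1) else 0)"

text \<open>Positivity of an n x n block matrix with 2x2 blocks X i j (i,j < n),
i.e. of an operator on C^n (x) H'.  For n = 1 this is positivity of X 0 0.\<close>
definition block_psd :: "nat \<Rightarrow> (nat \<Rightarrow> nat \<Rightarrow> qop) \<Rightarrow> bool" where
  "block_psd n X \<longleftrightarrow> (\<forall>v :: nat \<Rightarrow> qvec.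
     (let s = (\<Sum>i<n. \<Sum>j<n. \<Sum>k\<in>UNIV. cnj (v i $ k) * ((X i j *v v j) $ k))
      in Im s = 0 \<and> 0 \<le> Re s))"

definition psd :: "qop \<Rightarrow> bool" where
  "psd A \<longleftrightarrow> (\<forall>v :: qvec. let s = (\<Sum>k\<in>UNIV. cnj (v $ k) * ((A *v v) $ k))
      in Im s = 0 \<and> 0 \<le> Re s)"

definition complex_linear_map :: "(qop \<Rightarrow> qop) \<Rightarrow> bool" where
  "complex_linear_map E \<longleftrightarrow>
     (\<forall>a b X Y. E (smat a X + smat b Y) = smat a (E X) + smat b (E Y))"

text \<open>Complete positivity: id_n (x) E is positive for every ancilla dimension n.\<close>
definition completely_positive :: "(qop \<Rightarrow> qop) \<Rightarrow> bool" where
  "completely_positive E \<longleftrightarrow>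
     (\<forall>n X. block_psd n X \<longrightarrow> block_psd n (\<lambda>i j. E (X i j)))"

definition trace_nonincreasing :: "(qop \<Rightarrow> qop) \<Rightarrow> bool" where
  "trace_nonincreasing E \<longleftrightarrow> (\<forall>X. psd X \<longrightarrow> Re (trace (E X)) \<le> Re (trace X))"

definition Z2_invariant_operation :: "(qop \<Rightarrow> qop) \<Rightarrow> bool" where
  "Z2_invariant_operation E \<longleftrightarrow>
     complex_linear_map E \<and> completely_positive E \<and> trace_nonincreasing E \<and>
     (\<forall>X. E (piZ2 ** X ** piZ2) = piZ2 ** E X ** piZ2)"

text \<open>A (countable) Z2-invariant measurement, indexed by nat (finite families
are padded with zero operations); the sum of the operations is trace preserving.\<close>
definition Z2_invariant_measurement :: "(nat \<Rightarrow> qop \<Rightarrow> qop) \<Rightarrow> bool" where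
  "Z2_invariant_measurement E \<longleftrightarrow>
     (\<forall>\<mu>. Z2_invariant_operation (E \<mu>)) \<and>
     (\<forall>X. (\<lambda>\<mu>. trace (E \<mu> X)) sums trace X)"

definition pure_state :: "qvec \<Rightarrow> bool" where
  "pure_state v \<longleftrightarrow> norm v = 1"

definition coh :: "qvec \<Rightarrow> real" where
  "coh x = 2 * min ((cmod (x $ 0))\<^sup>2) ((cmod (x $ 1))\<^sup>2)"

definition ensemble_Z2_frameness_monotone :: "(qvec \<Rightarrow> real) \<Rightarrow> bool" where
  "ensemble_Z2_frameness_monotone F \<longleftrightarrow>
     (\<forall>\<psi> E \<phi>. pure_state \<psi> \<longrightarrow> Z2_invariant_measurement E \<longrightarrow>
        (\<forall>\<mu>. 0 < Re (trace (E \<mu> (proj \<psi>))) \<longrightarrow>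
             pure_state (\<phi> \<mu>) \<and>
             E \<mu> (proj \<psi>) = smat (Re (trace (E \<mu> (proj \<psi>)))) (proj (\<phi> \<mu>))) \<longrightarrow>
        (\<forall>N. (\<Sum>\<mu><N. Re (trace (E \<mu> (proj \<psi>))) * F (\<phi> \<mu>)) \<le> F \<psi>))"

end

theory Submission
  imports Defs
begin

lemma U2: "(UNIV::2 set) = {0,1}"
proof -
  have "x = 0 \<or> x = 1" for x :: 2 using exhaust_2[of x] by auto
  then show ?thesis by auto
qed
lemma s2: "sum f (UNIV::2 set) = f 0 + f 1" by (simp add: U2)
lemma all2: "(\<forall>i::2. P i) \<longleftrightarrow> P 0 \<and> P 1" using U2 by (metis UNIV_I insert_iff singletonD)
lemma veq2: "(x::'a^2) = y \<longleftrightarrow> x$0 = y$0 \<and> x$1 = y$1" by (simp add: vec_eq_iff all2)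

definition adj :: "qop \<Rightarrow> qop" where "adj K = (\<chi> i j. cnj (K$j$i))"
definition kr :: "qop \<Rightarrow> qop \<Rightarrow> qop" where "kr K X = K ** X ** adj K"
definition struc :: "qop \<Rightarrow> bool" where
  "struc K \<longleftrightarrow> (K$0$1=0 \<and> K$1$0=0) \<or> (K$0$0=0 \<and> K$1$1=0)"
definition c0 :: "qop \<Rightarrow> real" where "c0 K = (cmod (K$0$0))^2 + (cmod (K$1$0))^2"
definition c1 :: "qop \<Rightarrow> real" where "c1 K = (cmod (K$0$1))^2 + (cmod (K$1$1))^2"

lemma kr_nth: "kr K X $ i $ j =
  K$i$0 * X$0$0 * cnj (K$j$0) + K$i$0 * X$0$1 * cnj (K$j$1) +
  K$i$1 * X$1$0 * cnj (K$j$0) + K$i$1 * X$1$1 * cnj (K$j$1)"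
  by (simp add: kr_def adj_def matrix_matrix_mult_def s2 algebra_simps)

lemma kr_linear: "complex_linear_map (kr K)"
  unfolding complex_linear_map_def
  by (simp add: veq2 kr_nth smat_def algebra_simps)

lemma piZ2_conj: "(piZ2 ** X ** piZ2) $ i $ j = (if i = 0 then 1 else -1) * (if j = 0 then 1 else -1) * X$i$j"
  using U2 by (auto simp: piZ2_def matrix_matrix_mult_def s2)

lemma kr_cov: "struc K \<Longrightarrow> kr K (piZ2 ** X ** piZ2) = piZ2 ** kr K X ** piZ2"
  unfolding struc_def
  by (auto simp: veq2 piZ2_conj kr_nth algebra_simps)

lemma cmod_sq: "z * cnj z = complex_of_real ((cmod z)^2)"
  using complex_norm_square by simp

lemma kxk: "k * x * cnj k = x * (complex_of_real (cmod k))^2"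
  using cmod_sq[of k] by (simp add: algebra_simps)

lemma trace_kr: "struc K \<Longrightarrow> trace (kr K X) = of_real (c0 K) * X$0$0 + of_real (c1 K) * X$1$1"
  unfolding struc_def c0_def c1_def trace_def
  apply (simp add: s2 kr_nth)
  apply (elim disjE; simp add: kxk)
  done

lemma psd_diag: assumes "psd X" shows "Im (X$0$0) = 0 \<and> 0 \<le> Re (X$0$0)" "Im (X$1$1) = 0 \<and> 0 \<le> Re (X$1$1)"
proof -
  define e0 :: qvec where "e0 = (\<chi> k. if k = 0 then 1 else 0)"
  define e1 :: qvec where "e1 = (\<chi> k. if k = 1 then 1 else 0)"
  have "let s = (\<Sum>k\<in>UNIV. cnj (e0 $ k) * ((X *v e0) $ k))
      in Im s = 0 \<and> 0 \<le> Re s" using assms psd_def by blast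
  then show "Im (X$0$0) = 0 \<and> 0 \<le> Re (X$0$0)" by (simp add: s2 matrix_vector_mult_def e0_def Let_def)
  have "let s = (\<Sum>k\<in>UNIV. cnj (e1 $ k) * ((X *v e1) $ k))
      in Im s = 0 \<and> 0 \<le> Re s" using assms psd_def by blast
  then show "Im (X$1$1) = 0 \<and> 0 \<le> Re (X$1$1)" by (simp add: s2 matrix_vector_mult_def e1_def Let_def)
qed

lemma kr_tni: assumes "struc K" "c0 K \<le> 1" "c1 K \<le> 1" shows "trace_nonincreasing (kr K)"
  unfolding trace_nonincreasing_def
proof (intro allI impI)
  fix X assume "psd X"
  from psd_diag[OF this] have "0 \<le> Re (X$0$0)" "0 \<le> Re (X$1$1)" by auto
  then have "c0 K * Re (X$0$0) + c1 K * Re (X$1$1) \<le> Re (X$0$0) + Re (X$1$1)"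
    using assms by (simp add: add_mono mult_left_le_one_le c0_def c1_def)
  moreover have "trace (kr K X) = of_real (c0 K) * X$0$0 + of_real (c1 K) * X$1$1"
    using assms trace_kr by blast
  ultimately show "Re (trace (kr K X)) \<le> Re (trace X)"
    by (simp add: trace_def s2)
qed

lemma kr_form: "(\<Sum>k\<in>UNIV. cnj (v $ k) * ((kr K Y *v u) $ k)) =
   (\<Sum>k\<in>UNIV. cnj ((adj K *v v) $ k) * ((Y *v (adj K *v u)) $ k))"
  by (simp add: s2 kr_nth matrix_vector_mult_def adj_def algebra_simps)

lemma kr_cp: "completely_positive (kr K)"
  unfolding completely_positive_def block_psd_def
proof (intro allI impI)
  fix n X and v :: "nat \<Rightarrow> qvec"
  assume H: "\<forall>v :: nat \<Rightarrow> qvec.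
     (let s = (\<Sum>i<n. \<Sum>j<n. \<Sum>k\<in>UNIV. cnj (v i $ k) * ((X i j *v v j) $ k))
      in Im s = 0 \<and> 0 \<le> Re s)"
  have "(\<Sum>i<n. \<Sum>j<n. \<Sum>k\<in>UNIV. cnj (v i $ k) * ((kr K (X i j) *v v j) $ k))
     = (\<Sum>i<n. \<Sum>j<n. \<Sum>k\<in>UNIV. cnj ((\<lambda>i. adj K *v v i) i $ k) * ((X i j *v (\<lambda>i. adj K *v v i) j) $ k))"
    by (simp only: kr_form)
  then show "let s = (\<Sum>i<n. \<Sum>j<n. \<Sum>k\<in>UNIV. cnj (v i $ k) * ((kr K (X i j) *v v j) $ k))
      in Im s = 0 \<and> 0 \<le> Re s" using H[rule_format, of "\<lambda>i. adj K *v v i"] by simp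
qed

lemma c_nonneg: "0 \<le> c0 K" "0 \<le> c1 K" by (simp_all add: c0_def c1_def)

lemma kr_op: "struc K \<Longrightarrow> c0 K \<le> 1 \<Longrightarrow> c1 K \<le> 1 \<Longrightarrow> Z2_invariant_operation (kr K)"
  unfolding Z2_invariant_operation_def using kr_linear kr_cp kr_tni kr_cov by blast


definition Kf :: "qop \<Rightarrow> qop \<Rightarrow> nat \<Rightarrow> qop" where
  "Kf K0 K1 \<mu> = (if \<mu> = 0 then K0 else if \<mu> = 1 then K1 else 0)"

lemma struc0: "struc 0" by (simp add: struc_def)
lemma c00: "c0 0 = 0" "c1 0 = 0" by (simp_all add: c0_def c1_def)

lemma meas:
  assumes "struc K0" "struc K1" "c0 K0 + c0 K1 = 1" "c1 K0 + c1 K1 = 1"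
  shows "Z2_invariant_measurement (\<lambda>\<mu>. kr (Kf K0 K1 \<mu>))"
  unfolding Z2_invariant_measurement_def
proof (intro conjI allI)
  fix \<mu>
  show "Z2_invariant_operation (kr (Kf K0 K1 \<mu>))"
    using assms c_nonneg[of K0] c_nonneg[of K1]
    by (auto simp: Kf_def struc0 c00 intro!: kr_op)
next
  fix X
  have "(\<lambda>\<mu>. trace (kr (Kf K0 K1 \<mu>) X)) sums (\<Sum>\<mu>\<in>{0,1}. trace (kr (Kf K0 K1 \<mu>) X))"
    by (rule sums_finite) (auto simp: Kf_def trace_kr struc0 c00)
  moreover have "(\<Sum>\<mu>\<in>{0,1::nat}. trace (kr (Kf K0 K1 \<mu>) X)) = trace X"
  proof -
    have "(\<Sum>\<mu>\<in>{0,1::nat}. trace (kr (Kf K0 K1 \<mu>) X)) = trace (kr K0 X) + trace (kr K1 X)"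
      by (simp add: Kf_def)
    also have "\<dots> = trace X"
    proof -
      have a: "complex_of_real (c0 K1) = 1 - complex_of_real (c0 K0)"
        using assms(3) by (metis add_diff_cancel_left' of_real_1 of_real_diff)
      have b: "complex_of_real (c1 K1) = 1 - complex_of_real (c1 K0)"
        using assms(4) by (metis add_diff_cancel_left' of_real_1 of_real_diff)
      have t0: "trace (kr K0 X) = of_real (c0 K0) * X$0$0 + of_real (c1 K0) * X$1$1"
        using assms(1) by (rule trace_kr)
      have t1: "trace (kr K1 X) = of_real (c0 K1) * X$0$0 + of_real (c1 K1) * X$1$1"
        using assms(2) by (rule trace_kr)
      show ?thesis unfolding t0 t1 by (simp add: a b trace_def s2 algebra_simps)
    qed
    finally show ?thesis .
  qed
  ultimately show "(\<lambda>\<mu>. trace (kr (Kf K0 K1 \<mu>) X)) sums trace X" by simp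
qed

lemma norm2: "norm (x::qvec) = sqrt ((cmod (x$0))^2 + (cmod (x$1))^2)"
  by (simp add: norm_vec_def L2_set_def s2)

lemma pure_iff: "pure_state x \<longleftrightarrow> (cmod (x$0))^2 + (cmod (x$1))^2 = 1"
  unfolding pure_state_def norm2 by simp

lemma proj_kr: "proj (K *v x) = kr K (proj x)"
  by (simp add: veq2 proj_def kr_nth matrix_vector_mult_def s2 algebra_simps)

lemma proj_scale: "proj (\<chi> i. complex_of_real s * \<phi>$i) = smat (complex_of_real (s^2)) (proj \<phi>)"
  by (simp add: veq2 proj_def smat_def power2_eq_square algebra_simps)

lemma trace_smat_proj: "pure_state \<phi> \<Longrightarrow> trace (smat c (proj \<phi>)) = c"
proof -
  assume "pure_state \<phi>"
  then have "(cmod (\<phi>$0))^2 + (cmod (\<phi>$1))^2 = 1" by (simp add: pure_iff)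
  then have "complex_of_real ((cmod (\<phi>$0))^2 + (cmod (\<phi>$1))^2) = 1" by simp
  then have "\<phi>$0 * cnj (\<phi>$0) + \<phi>$1 * cnj (\<phi>$1) = 1" by (simp add: cmod_sq)
  then show ?thesis by (simp add: trace_def s2 smat_def proj_def algebra_simps flip: distrib_left)
qed

lemma step:
  assumes mon: "ensemble_Z2_frameness_monotone F"
    and psi: "pure_state \<psi>"
    and K: "struc K0" "struc K1" "c0 K0 + c0 K1 = 1" "c1 K0 + c1 K1 = 1"
    and e0: "K0 *v \<psi> = (\<chi> i. complex_of_real s0 * \<phi>0$i)" and p0: "pure_state \<phi>0"
    and e1: "K1 *v \<psi> = (\<chi> i. complex_of_real s1 * \<phi>1$i)" and p1: "pure_state \<phi>1"
  shows "s0^2 * F \<phi>0 + s1^2 * F \<phi>1 \<le> F \<psi>"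
proof -
  define E where "E = (\<lambda>\<mu>. kr (Kf K0 K1 \<mu>))"
  define \<phi> where "\<phi> = (\<lambda>\<mu>::nat. if \<mu> = 0 then \<phi>0 else \<phi>1)"
  have EM: "Z2_invariant_measurement E" unfolding E_def by (rule meas[OF K])
  have E0: "E 0 (proj \<psi>) = smat (complex_of_real (s0^2)) (proj \<phi>0)"
  proof -
    have "E 0 (proj \<psi>) = kr K0 (proj \<psi>)" by (simp add: E_def Kf_def)
    also have "\<dots> = proj (K0 *v \<psi>)" by (simp only: proj_kr)
    also have "\<dots> = smat (complex_of_real (s0^2)) (proj \<phi>0)" by (simp only: e0 proj_scale)
    finally show ?thesis .
  qed
  have E1: "E 1 (proj \<psi>) = smat (complex_of_real (s1^2)) (proj \<phi>1)"
  proof -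
    have "E 1 (proj \<psi>) = kr K1 (proj \<psi>)" by (simp add: E_def Kf_def)
    also have "\<dots> = proj (K1 *v \<psi>)" by (simp only: proj_kr)
    also have "\<dots> = smat (complex_of_real (s1^2)) (proj \<phi>1)" by (simp only: e1 proj_scale)
    finally show ?thesis .
  qed
  have E2: "\<mu> \<ge> 2 \<Longrightarrow> E \<mu> (proj \<psi>) = 0" for \<mu>
    by (simp add: E_def Kf_def kr_def)
  have T0: "Re (trace (E 0 (proj \<psi>))) = s0^2" using E0 trace_smat_proj[OF p0] by simp
  have T1: "Re (trace (E 1 (proj \<psi>))) = s1^2" using E1 trace_smat_proj[OF p1] by simp
  have H: "\<forall>\<mu>. 0 < Re (trace (E \<mu> (proj \<psi>))) \<longrightarrow>
             pure_state (\<phi> \<mu>) \<and>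
             E \<mu> (proj \<psi>) = smat (Re (trace (E \<mu> (proj \<psi>)))) (proj (\<phi> \<mu>))"
  proof (intro allI impI)
    fix \<mu> assume pos: "0 < Re (trace (E \<mu> (proj \<psi>)))"
    consider "\<mu> = 0" | "\<mu> = 1" | "\<mu> \<ge> 2" by linarith
    then show "pure_state (\<phi> \<mu>) \<and> E \<mu> (proj \<psi>) = smat (Re (trace (E \<mu> (proj \<psi>)))) (proj (\<phi> \<mu>))"
    proof cases
      case 1 then show ?thesis using E0 T0 p0 by (simp add: \<phi>_def)
    next
      case 2 then show ?thesis using E1 T1 p1 by (simp add: \<phi>_def)
    next
      case 3 then show ?thesis using E2 pos by (simp add: trace_def s2)
    qed
  qed
  have "(\<Sum>\<mu><2. Re (trace (E \<mu> (proj \<psi>))) * F (\<phi> \<mu>)) \<le> F \<psi>"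
    using mon psi EM H unfolding ensemble_Z2_frameness_monotone_def by blast
  moreover have "(\<Sum>\<mu><2. Re (trace (E \<mu> (proj \<psi>))) * F (\<phi> \<mu>)) = s0^2 * F \<phi>0 + s1^2 * F \<phi>1"
  proof -
    have "{..<2::nat} = {0,1}" by auto
    then show ?thesis using T0 T1 by (simp add: \<phi>_def)
  qed
  ultimately show ?thesis by simp
qed


definition vv :: "real \<Rightarrow> qvec" where
  "vv t = (\<chi> i. if i = 0 then complex_of_real (sqrt t) else complex_of_real (sqrt (1-t)))"
definition diag2 :: "complex \<Rightarrow> complex \<Rightarrow> qop" where
  "diag2 a b = (\<chi> i j. if i = j then (if i = 0 then a else b) else 0)"

lemma vv_nth[simp]: "vv t $ 0 = complex_of_real (sqrt t)" "vv t $ 1 = complex_of_real (sqrt (1-t))"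
  by (simp_all add: vv_def)

lemma vv_pure: "0 \<le> t \<Longrightarrow> t \<le> 1 \<Longrightarrow> pure_state (vv t)"
  by (simp add: pure_iff)

lemma diag2_nth[simp]: "diag2 a b $ 0 $ 0 = a" "diag2 a b $ 1 $ 1 = b" "diag2 a b $ 0 $ 1 = 0" "diag2 a b $ 1 $ 0 = 0"
  by (simp_all add: diag2_def)

lemma diag2_mv: "diag2 a b *v x = (\<chi> i. if i = 0 then a * x$0 else b * x$1)"
  by (simp add: veq2 matrix_vector_mult_def s2)

lemma struc_diag2: "struc (diag2 a b)" by (simp add: struc_def)
lemma c_diag2: "c0 (diag2 a b) = (cmod a)^2" "c1 (diag2 a b) = (cmod b)^2"
  by (simp_all add: c0_def c1_def)

lemma unitary:
  assumes mon: "ensemble_Z2_frameness_monotone F"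
    and K: "struc K" "c0 K = 1" "c1 K = 1"
    and psi: "pure_state \<psi>" and phi: "pure_state \<phi>" and e: "K *v \<psi> = \<phi>"
  shows "F \<phi> \<le> F \<psi>"
proof -
  have "1^2 * F \<phi> + 0^2 * F \<phi> \<le> F \<psi>"
  proof (rule step[OF mon psi K(1) struc0])
    show "c0 K + c0 0 = 1" "c1 K + c1 0 = 1" using K by (simp_all add: c00)
    show "K *v \<psi> = (\<chi> i. complex_of_real 1 * \<phi> $ i)" using e by simp
    show "0 *v \<psi> = (\<chi> i. complex_of_real 0 * \<phi> $ i)" by (simp add: veq2)
  qed (use phi in auto)
  then show ?thesis by simp
qed

definition uu :: "complex \<Rightarrow> complex" where
  "uu z = (if z = 0 then 1 else cnj z / complex_of_real (cmod z))"

lemma uu_mult: "uu z * z = complex_of_real (cmod z)"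
proof (cases "z = 0")
  case False
  then show ?thesis using cmod_sq[of z]
    by (simp add: uu_def field_simps power2_eq_square)
qed (simp add: uu_def)

lemma uu_cnj: "cnj (uu z) * complex_of_real (cmod z) = z"
proof (cases "z = 0")
  case False
  then show ?thesis using cmod_sq[of z]
    by (simp add: uu_def field_simps)
qed (simp add: uu_def)

lemma uu_norm: "cmod (uu z) = 1"
  by (simp add: uu_def norm_divide)

lemma phase:
  assumes mon: "ensemble_Z2_frameness_monotone F" and psi: "pure_state \<psi>"
  shows "F \<psi> = F (vv ((cmod (\<psi>$0))^2))"
proof -
  let ?t = "(cmod (\<psi>$0))^2"
  have n: "(cmod (\<psi>$0))^2 + (cmod (\<psi>$1))^2 = 1" using psi by (simp add: pure_iff)
  have s1: "sqrt (1 - ?t) = cmod (\<psi>$1)" using n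
    by (metis add_diff_cancel_left' norm_ge_zero real_sqrt_abs abs_of_nonneg)
  have v: "vv ?t = (\<chi> i. if i = 0 then complex_of_real (cmod (\<psi>$0)) else complex_of_real (cmod (\<psi>$1)))"
    by (simp add: veq2 s1)
  have "0 \<le> (cmod (\<psi>$1))^2" by simp
  then have pv: "pure_state (vv ?t)" using n by (intro vv_pure) (simp, linarith)
  let ?K = "diag2 (uu (\<psi>$0)) (uu (\<psi>$1))"
  let ?K' = "diag2 (cnj (uu (\<psi>$0))) (cnj (uu (\<psi>$1)))"
  have "F (vv ?t) \<le> F \<psi>"
    by (rule unitary[OF mon struc_diag2[of "uu (\<psi>$0)" "uu (\<psi>$1)"] _ _ psi pv])
       (simp_all add: c_diag2 uu_norm diag2_mv v veq2 uu_mult)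
  moreover have "F \<psi> \<le> F (vv ?t)"
    by (rule unitary[OF mon struc_diag2[of "cnj (uu (\<psi>$0))" "cnj (uu (\<psi>$1))"] _ _ pv psi])
       (simp_all add: c_diag2 uu_norm diag2_mv v veq2 uu_cnj s1)
  ultimately show ?thesis by simp
qed

lemma swap:
  assumes mon: "ensemble_Z2_frameness_monotone F" and t: "0 \<le> t" "t \<le> 1"
  shows "F (vv t) \<le> F (vv (1-t))"
proof -
  let ?K = "(\<chi> i j. if i = j then 0 else 1) :: qop"
  have st: "struc ?K" by (simp add: struc_def)
  show ?thesis
    by (rule unitary[OF mon st _ _ vv_pure vv_pure[OF t]])
       (use t in \<open>simp_all add: c0_def c1_def veq2 matrix_vector_mult_def s2\<close>)
qed

lemma split:
  assumes mon: "ensemble_Z2_frameness_monotone F"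
    and a: "0 < a" "a < 1" and p: "0 < p" "p < 1"
    and a1: "0 \<le> a1" "a1 \<le> 1" and a2: "0 \<le> a2" "a2 \<le> 1"
    and e: "p * a1 + (1 - p) * a2 = a"
  shows "p * F (vv a1) + (1 - p) * F (vv a2) \<le> F (vv a)"
proof -
  define x0 where "x0 = sqrt (p * a1 / a)"
  define y0 where "y0 = sqrt (p * (1 - a1) / (1 - a))"
  define x1 where "x1 = sqrt ((1 - p) * a2 / a)"
  define y1 where "y1 = sqrt ((1 - p) * (1 - a2) / (1 - a))"
  let ?K0 = "diag2 (complex_of_real x0) (complex_of_real y0)"
  let ?K1 = "diag2 (complex_of_real x1) (complex_of_real y1)"
  have c0s: "c0 ?K0 + c0 ?K1 = 1"
  proof -
    have "c0 ?K0 + c0 ?K1 = p * a1 / a + (1 - p) * a2 / a"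
      using a p a1 a2 by (simp add: c_diag2 x0_def x1_def)
    also have "\<dots> = 1" using a e by (simp add: field_simps)
    finally show ?thesis .
  qed
  have c1s: "c1 ?K0 + c1 ?K1 = 1"
  proof -
    have "c1 ?K0 + c1 ?K1 = p * (1 - a1) / (1 - a) + (1 - p) * (1 - a2) / (1 - a)"
      using a p a1 a2 by (simp add: c_diag2 y0_def y1_def)
    also have "\<dots> = (p * (1 - a1) + (1 - p) * (1 - a2)) / (1 - a)"
      by (simp add: add_divide_distrib)
    also have "p * (1 - a1) + (1 - p) * (1 - a2) = 1 - a" using e by (simp add: algebra_simps)
    also have "(1 - a) / (1 - a) = 1" using a by simp
    finally show ?thesis .
  qed
  have m1: "sqrt (u / a) * sqrt a = sqrt u" for u using a
    by (metis less_eq_real_def nonzero_divide_eq_eq not_less real_sqrt_mult real_sqrt_eq_zero_cancel_iff)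
  have m2: "sqrt (u / (1 - a)) * sqrt (1 - a) = sqrt u" for u using a
    by (metis diff_gt_0_iff_gt less_numeral_extra(3) nonzero_divide_eq_eq real_sqrt_mult)
  have "(sqrt p)^2 * F (vv a1) + (sqrt (1-p))^2 * F (vv a2) \<le> F (vv a)"
  proof (rule step[OF mon vv_pure struc_diag2 struc_diag2 c0s c1s])
    show "?K0 *v vv a = (\<chi> i. complex_of_real (sqrt p) * vv a1 $ i)"
      by (simp add: diag2_mv veq2 x0_def y0_def m1 m2 real_sqrt_mult flip: of_real_mult)
    show "?K1 *v vv a = (\<chi> i. complex_of_real (sqrt (1-p)) * vv a2 $ i)"
      by (simp add: diag2_mv veq2 x1_def y1_def m1 m2 real_sqrt_mult flip: of_real_mult)
  qed (use a a1 a2 in \<open>auto intro: vv_pure\<close>)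
  then show ?thesis using p by simp
qed


theorem theorem12:
  fixes F :: "qvec \<Rightarrow> real"
  assumes "\<forall>\<psi>. pure_state \<psi> \<longrightarrow> 0 \<le> F \<psi>"
    and "ensemble_Z2_frameness_monotone F"
  shows "\<exists>f :: real \<Rightarrow> real. mono_on {0..1} f \<and> concave_on {0..1} f \<and>
           (\<forall>\<psi>. pure_state \<psi> \<longrightarrow> F \<psi> = f (coh \<psi>))"
proof -
  note mon = assms(2)
  define g where "g t = F (vv t)" for t
  have sym: "g t = g (1 - t)" if "0 \<le> t" "t \<le> 1" for t
    using swap[OF mon, of t] swap[OF mon, of "1-t"] that by (simp add: g_def)
  have spl: "p * g a1 + (1 - p) * g a2 \<le> g a"
    if "0 < a" "a < 1" "0 < p" "p < 1" "0 \<le> a1" "a1 \<le> 1" "0 \<le> a2" "a2 \<le> 1"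
       "p * a1 + (1 - p) * a2 = a" for a p a1 a2
    using split[OF mon that] by (simp add: g_def)
  define f where "f c = g (c / 2)" for c
  have M: "mono_on {0..1} f"
  proof (rule mono_onI)
    fix r s :: real assume rs: "r \<in> {0..1}" "s \<in> {0..1}" "r \<le> s"
    show "f r \<le> f s"
    proof (cases "r = s")
      case False
      define a' where "a' = r / 2"
      define a where "a = s / 2"
      have h: "0 \<le> a'" "a' < a" "a \<le> 1/2" using rs False by (auto simp: a_def a'_def)
      define p where "p = (1 - a' - a) / (1 - 2 * a')"
      have d: "0 < 1 - 2 * a'" using h by linarith
      have p0: "0 < p" unfolding p_def using h d by (intro divide_pos_pos) linarith+
      have p1: "p < 1" unfolding p_def using h d by (simp add: divide_less_eq)
      have e: "p * a' + (1 - p) * (1 - a') = a"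
      proof -
        have "1 - p = (a - a') / (1 - 2 * a')" unfolding p_def using d by (simp add: field_simps)
        then have "p * a' + (1 - p) * (1 - a') = ((1 - a' - a) * a' + (a - a') * (1 - a')) / (1 - 2 * a')"
          unfolding p_def by (simp add: add_divide_distrib)
        also have "(1 - a' - a) * a' + (a - a') * (1 - a') = a * (1 - 2 * a')" by (simp add: algebra_simps)
        finally show ?thesis using d by simp
      qed
      have "p * g a' + (1 - p) * g (1 - a') \<le> g a"
        by (rule spl) (use h p0 p1 e in auto)
      moreover have "g (1 - a') = g a'" using sym[of a'] h by simp
      ultimately have "g a' \<le> g a" by (simp add: algebra_simps)
      then show ?thesis by (simp add: f_def a_def a'_def)
    qed simp
  qed
  have C: "concave_on {0..1} f"
    unfolding concave_on_def convex_on_def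
  proof (intro conjI ballI allI impI)
    show "convex {0..1::real}" by simp
  next
    fix x y :: real and u v :: real
    assume xy: "x \<in> {0..1}" "y \<in> {0..1}" and uv: "0 \<le> u" "0 \<le> v" "u + v = 1"
    show "- f (u *\<^sub>R x + v *\<^sub>R y) \<le> u * - f x + v * - f y"
    proof (cases "u = 0 \<or> v = 0")
      case True then show ?thesis using uv by auto
    next
      case False
      then have u: "0 < u" "u < 1" and v: "v = 1 - u" using uv by auto
      show ?thesis
      proof (cases "u * x + v * y = 0")
        case True
        have v0: "0 < v" using u v by simp
        have "0 \<le> u * x" "0 \<le> v * y" using u v0 xy by auto
        then have "u * x = 0" "v * y = 0" using True by linarith+
        then have "x = 0" "y = 0" using u v0 by auto
        moreover have "u * f 0 + v * f 0 = f 0" using uv by (metis distrib_right mult_1)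
        ultimately show ?thesis by simp
      next
        case False
        have "0 \<le> u * x" "0 \<le> v * y" "u * x \<le> u" "v * y \<le> v" using xy u v
          by (auto intro: mult_left_le)
        then have le: "u * x + v * y \<le> 1" "0 < u * x + v * y" using uv False by linarith+
        have "u * g (x/2) + (1 - u) * g (y/2) \<le> g ((u * x + v * y)/2)"
        proof (rule spl)
          have hv: "v = 1 - u" using uv by linarith
          show "u * (x / 2) + (1 - u) * (y / 2) = (u * x + v * y) / 2" unfolding hv by (simp add: add_divide_distrib)
        next show "0 < (u * x + v * y) / 2" using le by simp
        next show "(u * x + v * y) / 2 < 1" using le by simp
        qed (use u xy in auto)
        then show ?thesis using v by (simp add: f_def)
      qed
    qed
  qed
  have R: "F \<psi> = f (coh \<psi>)" if psi: "pure_state \<psi>" for \<psi>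
  proof -
    let ?t = "(cmod (\<psi>$0))^2"
    have n: "?t + (cmod (\<psi>$1))^2 = 1" using psi by (simp add: pure_iff)
    have "0 \<le> (cmod (\<psi>$1))^2" by simp
    then have t1: "?t \<le> 1" using n by linarith
    have t: "0 \<le> ?t" "?t \<le> 1" using t1 by simp_all
    have F: "F \<psi> = g ?t" using phase[OF mon psi] by (simp add: g_def)
    show ?thesis
    proof (cases "?t \<le> 1/2")
      case True
      then have "?t \<le> (cmod (\<psi>$1))^2" using n by linarith
      then have "coh \<psi> = 2 * ?t" unfolding coh_def by (simp only: min_absorb1)
      then show ?thesis using F by (simp add: f_def)
    next
      case False
      then have "(cmod (\<psi>$1))^2 \<le> ?t" using n by linarith
      then have "coh \<psi> = 2 * (cmod (\<psi>$1))^2" unfolding coh_def by (simp only: min_absorb2)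
      also have "(cmod (\<psi>$1))^2 = 1 - ?t" using n by linarith
      finally have "coh \<psi> = 2 * (1 - ?t)" .
      then have c: "coh \<psi> / 2 = 1 - ?t" by simp
      show ?thesis unfolding f_def c using F sym[OF t] by simp
    qed
  qed
  show ?thesis using M C R by blast
qed

end
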